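(* Let $n\ge2$, let $P$ be a partial $n$-Metric on a set $X$, let $\{x_i\}_{i\in\mathbb{N}}$ be a sequence in $X$ and let $r\in\mathbb{R}$. The following are equivalent: (a) $\{x_i\}$ is a Cauchy sequence with central distance $r$; (b) for every $\epsilon>0$ there is $N\in\mathbb{N}$ such that for all $i,j>N$, $-\epsilon<P(\langle x_i\rangle^{n-1},x_j)-r<\epsilon$; (c) for every $\epsilon>0$ there is $N\in\mathbb{N}$ such that for all $i\ge j>N$, $-\epsilon<P(\langle x_i\rangle^{n-1},x_j)-r<\epsilon$; (d) for every $\epsilon>0$ there is $N\in\mathbb{N}$ such that for all $i\ge j>N$, $-\epsilon<P(\langle x_j\rangle^{n-1},x_i)-r<\epsilon$.
   Context: Notation: $\langle a\rangle^k$ denotes the $k$-tuple $(a,\dots,a)$ inserted into an argument list. A partial $n$-Metric on $X$ is a function $P:X^n\to\mathbb{R}$ such that for all $x_1,\dots,x_n,a\in X$: (1) $P(\langle x_1\rangle^n)\le P(\langle x_1\rangle^{n-1},x_2)$; (2) $P$ is invariant under permutations of its $n$ arguments; (3) $P(\langle x_1\rangle^{n-1},x_2)=P(\langle x_1\rangle^n)$ and $P(\langle x_2\rangle^{n-1},x_1)=P(\langle x_2\rangle^n)$ iff $x_1=x_2$; (4) $P(x_1,\dots,x_n)\le P(x_1,\dots,x_{n-1},a)+P(\langle a\rangle^{n-1},x_n)-P(\langle a\rangle^n)$. A sequence $\{x_i\}$ is Cauchy with central distance $r\in\mathbb{R}$ if for every $\epsilon>0$ there is $N$ such that for all $i_1,\dots,i_n>N$,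 $-\epsilon<P(x_{i_1},\dots,x_{i_n})-r<\epsilon$. *)

theory Defs
  imports "HOL-Library.Multiset" Complex_Main
begin

text \<open>An n-ary function P on X is represented as a function on lists; only lists
of length n with entries in X are relevant. The tuple notation of the paper
corresponds to list concatenation, and replicate k a is the k-tuple (a,...,a).\<close>

definition partial_n_metric :: "nat \<Rightarrow> 'a set \<Rightarrow> ('a list \<Rightarrow> real) \<Rightarrow> bool" where
  "partial_n_metric n X P \<longleftrightarrow>
     (\<forall>x1\<in>X. \<forall>x2\<in>X. P (replicate n x1) \<le> P (replicate (n - 1) x1 @ [x2])) \<and>
     (\<forall>xs ys. length xs = n \<and> set xs \<subseteq> X \<and> mset ys = mset xs \<longrightarrow> P ys = P xs) \<and>
     (\<forall>x1\<in>X. \<forall>x2\<in>X.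
        (P (replicate (n - 1) x1 @ [x2]) = P (replicate n x1) \<and>
         P (replicate (n - 1) x2 @ [x1]) = P (replicate n x2)) \<longleftrightarrow> x1 = x2) \<and>
     (\<forall>xs xn a. length xs = n - 1 \<and> set xs \<subseteq> X \<and> xn \<in> X \<and> a \<in> X \<longrightarrow>
        P (xs @ [xn]) \<le> P (xs @ [a]) + P (replicate (n - 1) a @ [xn]) - P (replicate n a))"

definition pnm_cauchy :: "nat \<Rightarrow> ('a list \<Rightarrow> real) \<Rightarrow> (nat \<Rightarrow> 'a) \<Rightarrow> real \<Rightarrow> bool" where
  "pnm_cauchy n P x r \<longleftrightarrow>
     (\<forall>\<epsilon>>0. \<exists>N::nat. \<forall>is. length is = n \<and> (\<forall>i\<in>set is. i > N) \<longrightarrow>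
        - \<epsilon> < P (map x is) - r \<and> P (map x is) - r < \<epsilon>)"

end

theory Submission
  imports Defs
begin

lemma rep_snoc: "n \<ge> 1 \<Longrightarrow> replicate (n - 1) a @ [a] = replicate n a"
proof -
  assume "n \<ge> 1"
  then have "n = Suc (n - 1)" by simp
  then have "replicate n a = replicate (Suc (n - 1)) a" by simp
  also have "\<dots> = replicate (n - 1) a @ [a]" by (simp add: replicate_append_same)
  finally show ?thesis by simp
qed

lemma pnm_perm:
  assumes "partial_n_metric n X P" "length xs = n" "set xs \<subseteq> X" "mset ys = mset xs"
  shows "P ys = P xs"
  using assms unfolding partial_n_metric_def by blast

lemma pnm_tri:
  assumes "partial_n_metric n X P" "length xs = n - 1" "set xs \<subseteq> X" "xn \<in> X" "a \<in> X"
  shows "P (xs @ [xn]) \<le> P (xs @ [a]) + P (replicate (n - 1) a @ [xn]) - P (replicate n a)"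
  using assms unfolding partial_n_metric_def by blast

lemma upper_gen:
  assumes pm: "partial_n_metric n X P" and n: "n \<ge> 1" and a: "a \<in> X"
  shows "length ys \<le> n \<Longrightarrow> set ys \<subseteq> X \<Longrightarrow>
    P (replicate (n - length ys) a @ ys) \<le> P (replicate n a) +
      sum_list (map (\<lambda>y. P (replicate (n - 1) a @ [y]) - P (replicate n a)) ys)"
proof (induction ys)
  case Nil then show ?case by simp
next
  case (Cons y ys)
  define m where "m = n - Suc (length ys)"
  define zs where "zs = replicate m a @ ys"
  have lz: "length zs = n - 1" using Cons.prems by (simp add: zs_def m_def)
  have sz: "set zs \<subseteq> X" using Cons.prems a by (auto simp: zs_def)
  have y: "y \<in> X" using Cons.prems by auto
  have e1: "P (replicate (n - length (y#ys)) a @ y # ys) = P (zs @ [y])"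
    by (rule pnm_perm[OF pm]) (use lz sz y n in \<open>auto simp: zs_def m_def\<close>)
  have e2: "P (zs @ [a]) = P (replicate (n - length ys) a @ ys)"
  proof (rule pnm_perm[OF pm])
    show "length (replicate (n - length ys) a @ ys) = n" using Cons.prems by simp
    show "set (replicate (n - length ys) a @ ys) \<subseteq> X" using Cons.prems a by auto
    have "n - length ys = Suc m" using Cons.prems by (simp add: m_def)
    then show "mset (zs @ [a]) = mset (replicate (n - length ys) a @ ys)"
      by (simp add: zs_def)
  qed
  have "P (zs @ [y]) \<le> P (zs @ [a]) + P (replicate (n - 1) a @ [y]) - P (replicate n a)"
    by (rule pnm_tri[OF pm lz sz y a])
  with e1 e2 Cons show ?case by simp
qed

lemma lower_gen:
  assumes pm: "partial_n_metric n X P" and n: "n \<ge> 1" and b: "b \<in> X"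
  shows "length ys \<le> n \<Longrightarrow> set ys \<subseteq> X \<Longrightarrow>
    P (replicate (n - length ys) b @ ys) \<ge> P (replicate n b) -
      sum_list (map (\<lambda>y. P (replicate (n - 1) y @ [b]) - P (replicate n y)) ys)"
proof (induction ys)
  case Nil then show ?case by simp
next
  case (Cons y ys)
  define m where "m = n - Suc (length ys)"
  define zs where "zs = replicate m b @ ys"
  have lz: "length zs = n - 1" using Cons.prems by (simp add: zs_def m_def)
  have sz: "set zs \<subseteq> X" using Cons.prems b by (auto simp: zs_def)
  have y: "y \<in> X" using Cons.prems by auto
  have e1: "P (replicate (n - length (y#ys)) b @ y # ys) = P (zs @ [y])"
    by (rule pnm_perm[OF pm]) (use lz sz y n in \<open>auto simp: zs_def m_def\<close>)
  have e2: "P (zs @ [b]) = P (replicate (n - length ys) b @ ys)"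
  proof (rule pnm_perm[OF pm])
    show "length (replicate (n - length ys) b @ ys) = n" using Cons.prems by simp
    show "set (replicate (n - length ys) b @ ys) \<subseteq> X" using Cons.prems b by auto
    have "n - length ys = Suc m" using Cons.prems by (simp add: m_def)
    then show "mset (zs @ [b]) = mset (replicate (n - length ys) b @ ys)"
      by (simp add: zs_def)
  qed
  have "P (zs @ [b]) \<le> P (zs @ [y]) + P (replicate (n - 1) y @ [b]) - P (replicate n y)"
    by (rule pnm_tri[OF pm lz sz b y])
  with e1 e2 Cons show ?case by simp
qed

lemma sum_list_le:
  fixes c :: real and f :: "'b \<Rightarrow> real"
  shows "(\<And>y. y \<in> set ys \<Longrightarrow> f y \<le> c) \<Longrightarrow> sum_list (map f ys) \<le> real (length ys) * c"
  by (induction ys) (auto simp: algebra_simps intro: add_mono)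

lemma bound_both:
  fixes r e :: real
  assumes pm: "partial_n_metric n X P" and n: "n \<ge> 2" and xX: "\<And>i. x i \<in> X"
    and len: "length ks = n" and e: "e \<ge> 0"
    and ua: "\<And>k. k \<in> set ks \<Longrightarrow> P (replicate (n - 1) (x a) @ [x k]) \<le> r + e"
    and ua2: "r - e \<le> P (replicate n (x a))" "P (replicate n (x a)) \<le> r + e"
    and lb: "\<And>k. k \<in> set ks \<Longrightarrow> P (replicate (n - 1) (x k) @ [x b]) \<le> r + e"
    and lb2: "\<And>k. k \<in> set ks \<Longrightarrow> r - e \<le> P (replicate n (x k))"
    and lb3: "r - e \<le> P (replicate n (x b))"
  shows "P (map x ks) \<le> r + (2 * real n + 1) * e \<and> r - (2 * real n + 1) * e \<le> P (map x ks)"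
proof -
  have n1: "n \<ge> 1" using n by simp
  have l: "length (map x ks) \<le> n" "set (map x ks) \<subseteq> X" using len xX by auto
  note U = upper_gen[OF pm n1 xX[of a] l]
  note L = lower_gen[OF pm n1 xX[of b] l]
  have s1: "sum_list (map (\<lambda>y. P (replicate (n - 1) (x a) @ [y]) - P (replicate n (x a))) (map x ks))
      \<le> length (map x ks) * (2*e)"
    by (rule sum_list_le[where ys="map x ks" and c="2*e"]) (use ua ua2 in force)
  have s2: "sum_list (map (\<lambda>y. P (replicate (n - 1) y @ [x b]) - P (replicate n y)) (map x ks))
      \<le> length (map x ks) * (2*e)"
    by (rule sum_list_le[where ys="map x ks" and c="2*e"]) (use lb lb2 in force)
  show ?thesis using U L s1 s2 ua2 lb3 len by (simp add: algebra_simps)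
qed

theorem theorem4p11:
  fixes n :: nat and X :: "'a set" and P :: "'a list \<Rightarrow> real"
    and x :: "nat \<Rightarrow> 'a" and r :: real
  assumes "n \<ge> 2" and "partial_n_metric n X P" and "\<And>i. x i \<in> X"
  shows "(pnm_cauchy n P x r \<longleftrightarrow>
          (\<forall>\<epsilon>>0. \<exists>N::nat. \<forall>i j. i > N \<and> j > N \<longrightarrow>
             - \<epsilon> < P (replicate (n - 1) (x i) @ [x j]) - r \<and> P (replicate (n - 1) (x i) @ [x j]) - r < \<epsilon>)) \<and>
         (pnm_cauchy n P x r \<longleftrightarrow>
          (\<forall>\<epsilon>>0. \<exists>N::nat. \<forall>i j. i \<ge> j \<and> j > N \<longrightarrow>
             - \<epsilon> < P (replicate (n - 1) (x i) @ [x j]) - r \<and> P (replicate (n - 1) (x i) @ [x j]) - r < \<epsilon>)) \<and>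
         (pnm_cauchy n P x r \<longleftrightarrow>
          (\<forall>\<epsilon>>0. \<exists>N::nat. \<forall>i j. i \<ge> j \<and> j > N \<longrightarrow>
             - \<epsilon> < P (replicate (n - 1) (x j) @ [x i]) - r \<and> P (replicate (n - 1) (x j) @ [x i]) - r < \<epsilon>))"
proof -
  note pm = assms(2) and n = assms(1) and xX = assms(3)
  have rs: "\<And>k. replicate (n - 1) (x k) @ [x k] = replicate n (x k)"
    using n by (intro rep_snoc) simp
  let ?Q = "\<lambda>i j. P (replicate (n - 1) (x i) @ [x j])"
  let ?B = "\<forall>\<epsilon>>0. \<exists>N::nat. \<forall>i j. i > N \<and> j > N \<longrightarrow> - \<epsilon> < ?Q i j - r \<and> ?Q i j - r < \<epsilon>"
  let ?C = "\<forall>\<epsilon>>0. \<exists>N::nat. \<forall>i j. i \<ge> j \<and> j > N \<longrightarrow> - \<epsilon> < ?Q i j - r \<and> ?Q i j - r < \<epsilon>"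
  let ?D = "\<forall>\<epsilon>>0. \<exists>N::nat. \<forall>i j. i \<ge> j \<and> j > N \<longrightarrow> - \<epsilon> < ?Q j i - r \<and> ?Q j i - r < \<epsilon>"
  have AB: "?B" if A: "pnm_cauchy n P x r"
  proof (intro allI impI)
    fix \<epsilon> :: real assume "\<epsilon> > 0"
    then obtain N where N: "\<And>is. length is = n \<Longrightarrow> (\<forall>i\<in>set is. i > N) \<Longrightarrow>
        - \<epsilon> < P (map x is) - r \<and> P (map x is) - r < \<epsilon>"
      using A unfolding pnm_cauchy_def by blast
    show "\<exists>N. \<forall>i j. i > N \<and> j > N \<longrightarrow> - \<epsilon> < ?Q i j - r \<and> ?Q i j - r < \<epsilon>"
    proof (intro exI allI impI)
      fix i j assume "N < i \<and> N < j"
      then show "- \<epsilon> < ?Q i j - r \<and> ?Q i j - r < \<epsilon>"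
        using N[of "replicate (n - 1) i @ [j]"] n by (simp add: map_replicate)
    qed
  qed
  have BC: "?C" if B: "?B"
  proof (intro allI impI)
    fix \<epsilon> :: real assume "\<epsilon> > 0"
    then obtain N where N: "\<forall>i j. i > N \<and> j > N \<longrightarrow> - \<epsilon> < ?Q i j - r \<and> ?Q i j - r < \<epsilon>"
      using B by blast
    show "\<exists>N. \<forall>i j. i \<ge> j \<and> j > N \<longrightarrow> - \<epsilon> < ?Q i j - r \<and> ?Q i j - r < \<epsilon>"
    proof (rule exI[of _ N], intro allI impI)
      fix i j :: nat assume h: "j \<le> i \<and> N < j"
      then have "N < i \<and> N < j" by linarith
      then show "- \<epsilon> < ?Q i j - r \<and> ?Q i j - r < \<epsilon>" using N by blast
    qed
  qed
  have BD: "?D" if B: "?B"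
  proof (intro allI impI)
    fix \<epsilon> :: real assume "\<epsilon> > 0"
    then obtain N where N: "\<forall>i j. i > N \<and> j > N \<longrightarrow> - \<epsilon> < ?Q i j - r \<and> ?Q i j - r < \<epsilon>"
      using B by blast
    show "\<exists>N. \<forall>i j. i \<ge> j \<and> j > N \<longrightarrow> - \<epsilon> < ?Q j i - r \<and> ?Q j i - r < \<epsilon>"
    proof (rule exI[of _ N], intro allI impI)
      fix i j :: nat assume h: "j \<le> i \<and> N < j"
      then have "N < j \<and> N < i" by linarith
      then show "- \<epsilon> < ?Q j i - r \<and> ?Q j i - r < \<epsilon>" using N by blast
    qed
  qed
  have CA: "pnm_cauchy n P x r" if C: "?C"
    unfolding pnm_cauchy_def
  proof (intro allI impI)
    fix \<epsilon> :: real assume ep: "\<epsilon> > 0"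
    define e where "e = \<epsilon> / (2 * n + 2)"
    have e0: "e > 0" using ep by (simp add: e_def)
    have ee: "(2 * real n + 1) * e < \<epsilon>" using ep by (simp add: e_def field_simps)
    obtain N where N: "\<And>i j. i \<ge> j \<Longrightarrow> j > N \<Longrightarrow> - e < ?Q i j - r \<and> ?Q i j - r < e"
      using C e0 by blast
    show "\<exists>N. \<forall>is. length is = n \<and> (\<forall>i\<in>set is. N < i) \<longrightarrow>
        - \<epsilon> < P (map x is) - r \<and> P (map x is) - r < \<epsilon>"
    proof (intro exI allI impI)
      fix "is" :: "nat list" assume H: "length is = n \<and> (\<forall>i\<in>set is. N < i)"
      have ne: "is \<noteq> []" using H n by auto
      define a where "a = Max (set is)"
      define b where "b = Min (set is)"
      have aI: "a \<in> set is" "\<And>k. k \<in> set is \<Longrightarrow> k \<le> a" using ne by (auto simp: a_def)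
      have bI: "b \<in> set is" "\<And>k. k \<in> set is \<Longrightarrow> b \<le> k" using ne by (auto simp: b_def)
      have diag: "\<And>k. k \<in> set is \<Longrightarrow> r - e \<le> P (replicate n (x k)) \<and> P (replicate n (x k)) \<le> r + e"
      proof -
        fix k assume k: "k \<in> set is"
        have "- e < ?Q k k - r \<and> ?Q k k - r < e" using N[OF le_refl] H k by blast
        then show "r - e \<le> P (replicate n (x k)) \<and> P (replicate n (x k)) \<le> r + e"
          using rs[of k] by simp
      qed
      have "P (map x is) \<le> r + (2 * real n + 1) * e \<and> r - (2 * real n + 1) * e \<le> P (map x is)"
      proof (rule bound_both[OF pm n xX, where ks="is" and e=e and r=r and a=a and b=b])
        show "length is = n" using H by simp
        show "0 \<le> e" using e0 by simp
        show "\<And>k. k \<in> set is \<Longrightarrow> ?Q a k \<le> r + e"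
        proof -
          fix k assume k: "k \<in> set is"
          have kN: "N < k" using H k by blast
          show "?Q a k \<le> r + e" using N[OF aI(2)[OF k] kN] by linarith
        qed
        show "r - e \<le> P (replicate n (x a))" "P (replicate n (x a)) \<le> r + e" using diag aI by auto
        show "\<And>k. k \<in> set is \<Longrightarrow> ?Q k b \<le> r + e"
        proof -
          fix k assume k: "k \<in> set is"
          have bN: "N < b" using H bI(1) by blast
          show "?Q k b \<le> r + e" using N[OF bI(2)[OF k] bN] by linarith
        qed
        show "\<And>k. k \<in> set is \<Longrightarrow> r - e \<le> P (replicate n (x k))" using diag by auto
        show "r - e \<le> P (replicate n (x b))" using diag bI by auto
      qed
      then show "- \<epsilon> < P (map x is) - r \<and> P (map x is) - r < \<epsilon>" using ee by linarith
    qed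
  qed
  have DA: "pnm_cauchy n P x r" if D: "?D"
    unfolding pnm_cauchy_def
  proof (intro allI impI)
    fix \<epsilon> :: real assume ep: "\<epsilon> > 0"
    define e where "e = \<epsilon> / (2 * n + 2)"
    have e0: "e > 0" using ep by (simp add: e_def)
    have ee: "(2 * real n + 1) * e < \<epsilon>" using ep by (simp add: e_def field_simps)
    obtain N where N: "\<And>i j. i \<ge> j \<Longrightarrow> j > N \<Longrightarrow> - e < ?Q j i - r \<and> ?Q j i - r < e"
      using D e0 by blast
    show "\<exists>N. \<forall>is. length is = n \<and> (\<forall>i\<in>set is. N < i) \<longrightarrow>
        - \<epsilon> < P (map x is) - r \<and> P (map x is) - r < \<epsilon>"
    proof (intro exI allI impI)
      fix "is" :: "nat list" assume H: "length is = n \<and> (\<forall>i\<in>set is. N < i)"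
      have ne: "is \<noteq> []" using H n by auto
      define a where "a = Min (set is)"
      define b where "b = Max (set is)"
      have aI: "a \<in> set is" "\<And>k. k \<in> set is \<Longrightarrow> a \<le> k" using ne by (auto simp: a_def)
      have bI: "b \<in> set is" "\<And>k. k \<in> set is \<Longrightarrow> k \<le> b" using ne by (auto simp: b_def)
      have diag: "\<And>k. k \<in> set is \<Longrightarrow> r - e \<le> P (replicate n (x k)) \<and> P (replicate n (x k)) \<le> r + e"
      proof -
        fix k assume k: "k \<in> set is"
        have "- e < ?Q k k - r \<and> ?Q k k - r < e" using N[OF le_refl] H k by blast
        then show "r - e \<le> P (replicate n (x k)) \<and> P (replicate n (x k)) \<le> r + e"
          using rs[of k] by simp
      qed
      have "P (map x is) \<le> r + (2 * real n + 1) * e \<and> r - (2 * real n + 1) * e \<le> P (map x is)"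
      proof (rule bound_both[OF pm n xX, where ks="is" and e=e and r=r and a=a and b=b])
        show "length is = n" using H by simp
        show "0 \<le> e" using e0 by simp
        show "\<And>k. k \<in> set is \<Longrightarrow> ?Q a k \<le> r + e"
        proof -
          fix k assume k: "k \<in> set is"
          have aN: "N < a" using H aI(1) by blast
          show "?Q a k \<le> r + e" using N[OF aI(2)[OF k] aN] by linarith
        qed
        show "r - e \<le> P (replicate n (x a))" "P (replicate n (x a)) \<le> r + e" using diag aI by auto
        show "\<And>k. k \<in> set is \<Longrightarrow> ?Q k b \<le> r + e"
        proof -
          fix k assume k: "k \<in> set is"
          have kN: "N < k" using H k by blast
          show "?Q k b \<le> r + e" using N[OF bI(2)[OF k] kN] by linarith
        qed
        show "\<And>k. k \<in> set is \<Longrightarrow> r - e \<le> P (replicate n (x k))" using diag by auto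
        show "r - e \<le> P (replicate n (x b))" using diag bI by auto
      qed
      then show "- \<epsilon> < P (map x is) - r \<and> P (map x is) - r < \<epsilon>" using ee by linarith
    qed
  qed
  have e1: "pnm_cauchy n P x r \<longleftrightarrow> ?B"
  proof
    assume "pnm_cauchy n P x r" then show ?B by (rule AB)
  next
    assume "?B" then show "pnm_cauchy n P x r" by (rule CA[OF BC])
  qed
  have e2: "pnm_cauchy n P x r \<longleftrightarrow> ?C"
  proof
    assume "pnm_cauchy n P x r" then show ?C by (rule BC[OF AB])
  next
    assume "?C" then show "pnm_cauchy n P x r" by (rule CA)
  qed
  have e3: "pnm_cauchy n P x r \<longleftrightarrow> ?D"
  proof
    assume "pnm_cauchy n P x r" then show ?D by (rule BD[OF AB])
  next
    assume "?D" then show "pnm_cauchy n P x r" by (rule DA)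
  qed
  show ?thesis by (intro conjI e1 e2 e3)
qed

end
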